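(* For integers $n,m$ and $y=(y_1,y_2,y_3)\in Q$, \[\sum_{r=y_1}^n\sum_{s=y_1+y_2}^m\mathcal{K}_{n,m;r,s}(z,w;q)\,\Phi_{r,s;y}(z,w;q)=z^{y_1}w^{y_1+y_2}q^{\frac12(y_1^2+y_2^2+y_3^2)}\Phi_{n,m;y}(z,w;q).\]
   Context: $Q=\{y\in\mathbb{Z}^3:y_1+y_2+y_3=0\}$. For $n\in\mathbb{Z}$, $(a;q)_n=(a;q)_\infty/(aq^n;q)_\infty$ (so $1/(q;q)_n=0$ for $n<0$). $\mathcal{K}_{n,m;r,s}(z,w;q):=\frac{z^rw^sq^{r^2-rs+s^2}}{(q;q)_{n-r}(q;q)_{m-s}}$, and \[\Phi_{n,m;y}(z,w;q):=\frac{(zwq;q)_{n+m}}{(q;q)_{n-y_1}(zq;q)_{n-y_2}(zwq;q)_{n-y_3}(q;q)_{m+y_3}(wq;q)_{m+y_2}(zwq;q)_{m+y_1}}.\] A sum $\sum_{r=A}^B$ with $B<A$ is empty. *)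

theory Defs
  imports "HOL-Analysis.Analysis"
begin

definition qpoch_inf :: "complex \<Rightarrow> complex \<Rightarrow> complex" where
  "qpoch_inf a q = (\<Prod>k. 1 - a * q ^ k)"

text \<open>(a;q)_n = (a;q)_inf / (a q^n;q)_inf for integer n (so 1/(q;q)_n = 0 for n < 0).\<close>
definition qpoch :: "complex \<Rightarrow> complex \<Rightarrow> int \<Rightarrow> complex" where
  "qpoch a q n = qpoch_inf a q / qpoch_inf (a * (q powi n)) q"

definition Kker :: "int \<Rightarrow> int \<Rightarrow> int \<Rightarrow> int \<Rightarrow> complex \<Rightarrow> complex \<Rightarrow> complex \<Rightarrow> complex" where
  "Kker n m r s z w q =
     (z powi r) * (w powi s) * (q powi (r * r - r * s + s * s)) / (qpoch q q (n - r) * qpoch q q (m - s))"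

definition Phi :: "int \<Rightarrow> int \<Rightarrow> int \<Rightarrow> int \<Rightarrow> int \<Rightarrow> complex \<Rightarrow> complex \<Rightarrow> complex \<Rightarrow> complex" where
  "Phi n m y1 y2 y3 z w q =
     qpoch (z*w*q) q (n + m) /
     (qpoch q q (n - y1) * qpoch (z*q) q (n - y2) * qpoch (z*w*q) q (n - y3) *
      qpoch q q (m + y3) * qpoch (w*q) q (m + y2) * qpoch (z*w*q) q (m + y1))"

end

theory Submission
  imports Defs
begin


lemma qinf_conv:
  fixes a q :: complex
  assumes "norm q < 1"
  shows "convergent_prod (\<lambda>k. 1 - a * q ^ k)"
proof -
  have "summable (\<lambda>k. norm a * norm q ^ k)"
    using assms by (intro summable_mult summable_geometric) auto
  moreover have "\<And>k. norm ((1 - a * q ^ k) - 1) = norm a * norm q ^ k"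
  proof -
    fix k
    have "(1 - a * q ^ k) - 1 = - (a * q ^ k)" by simp
    hence "norm ((1 - a * q ^ k) - 1) = norm (a * q ^ k)" by (simp only: norm_minus_cancel)
    also have "\<dots> = norm a * norm (q ^ k)" by (rule norm_mult)
    also have "\<dots> = norm a * norm q ^ k" by (simp only: norm_power)
    finally show "norm ((1 - a * q ^ k) - 1) = norm a * norm q ^ k" .
  qed
  ultimately have "summable (\<lambda>k. norm ((1 - a * q ^ k) - 1))"
    by simp
  hence "abs_convergent_prod (\<lambda>k. 1 - a * q ^ k)"
    by (rule summable_imp_abs_convergent_prod)
  thus ?thesis by (rule abs_convergent_prod_imp_convergent_prod)
qed

lemma qinf_rec:
  assumes "norm q < 1"
  shows "qpoch_inf a q = (1 - a) * qpoch_inf (a*q) q"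
proof -
  have c: "convergent_prod (\<lambda>k. 1 - (a*q) * q ^ k)" using qinf_conv[OF assms] .
  have "(\<lambda>k. 1 - (a*q) * q ^ k) has_prod qpoch_inf (a*q) q"
    using c unfolding qpoch_inf_def by (rule convergent_prod_has_prod)
  hence "(\<lambda>k. (\<lambda>k. 1 - a * q ^ k) (Suc k)) has_prod qpoch_inf (a*q) q"
    by (simp add: mult.assoc mult.commute mult.left_commute)
  hence "(\<lambda>k. 1 - a * q ^ k) has_prod (qpoch_inf (a*q) q * (1 - a))"
    using has_prod_Suc_imp[of "\<lambda>k. 1 - a * q ^ k"] by simp
  hence "qpoch_inf a q = qpoch_inf (a*q) q * (1 - a)"
    unfolding qpoch_inf_def by (metis has_prod_unique)
  thus ?thesis by simp
qed

lemma qinf_nz: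
  assumes "norm q < 1" "\<And>k::nat. a * q ^ k \<noteq> 1"
  shows "qpoch_inf a q \<noteq> 0"
  unfolding qpoch_inf_def
  using assms by (intro prodinf_nonzero qinf_conv) (auto simp: right_diff_distrib)


definition P :: "complex \<Rightarrow> complex \<Rightarrow> nat \<Rightarrow> complex" where
  "P q a n = (\<Prod>t<n. 1 - a * q ^ t)"

lemma P_0[simp]: "P q a 0 = 1" by (simp add: P_def)

lemma P_Suc: "P q a (Suc n) = P q a n * (1 - a * q ^ n)"
  by (simp add: P_def)

lemma P_Suc': "P q a (Suc n) = (1 - a) * P q (a * q) n"
  unfolding P_def by (subst prod.lessThan_Suc_shift) (simp add: mult.assoc)

lemma P_add: "P q a (m + n) = P q a m * P q (a * q ^ m) n"
  by (induction n) (simp_all add: P_Suc power_add mult.assoc)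

lemma P_nz: assumes "\<And>t. t < n \<Longrightarrow> a * q ^ t \<noteq> 1" shows "P q a n \<noteq> 0"
  unfolding P_def using assms by (simp add: prod_zero_iff)

lemma qpow_ne1: fixes q :: complex assumes "norm q < 1" shows "q * q ^ t \<noteq> 1"
proof
  assume "q * q ^ t = 1"
  hence "norm (q ^ Suc t) = 1" by simp
  moreover have "norm (q ^ Suc t) < 1"
  proof -
    have "norm (q ^ Suc t) = norm q * norm q ^ t" by (simp add: norm_mult norm_power)
    also have "\<dots> \<le> norm q * 1"
      using assms by (intro mult_left_mono power_le_one) auto
    finally show ?thesis using assms by simp
  qed
  ultimately show False by simp
qed

lemma Pq_nz: "norm q < 1 \<Longrightarrow> P q q n \<noteq> 0"
  by (rule P_nz) (simp add: qpow_ne1)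

lemma qinf_P: assumes "norm q < 1"
  shows "qpoch_inf a q = P q a n * qpoch_inf (a * q ^ n) q"
proof (induction n)
  case 0 then show ?case by simp
next
  case (Suc n)
  have "qpoch_inf (a * q ^ n) q = (1 - a * q ^ n) * qpoch_inf (a * q ^ n * q) q"
    by (rule qinf_rec[OF assms])
  then show ?case using Suc by (simp add: P_Suc mult.assoc mult.commute mult.left_commute)
qed

lemma qpoch_nat: assumes "norm q < 1" "qpoch_inf (a * q ^ n) q \<noteq> 0"
  shows "qpoch a q (int n) = P q a n"
  using assms qinf_P[OF assms(1), of a n] by (simp add: qpoch_def)

lemma qpoch_add: assumes "q \<noteq> 0" "qpoch_inf (a * q powi c) q \<noteq> 0"
  shows "qpoch a q (c + d) = qpoch a q c * qpoch (a * q powi c) q d"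
  using assms by (simp add: qpoch_def power_int_add mult.assoc)

lemma qpoch_neg: assumes "norm q < 1" "q \<noteq> 0" "c < 0"
  shows "qpoch q q c = 0"
proof -
  define t where "t = nat (- c - 1)"
  have ct: "c + 1 = - int t" using assms(3) by (simp add: t_def)
  have "q * q powi c = q powi (c + 1)" using assms(2) by (simp add: power_int_add)
  also have "\<dots> = inverse (q ^ t)" by (simp add: ct power_int_minus)
  finally have e: "q * q powi c = inverse (q ^ t)" .
  have "P q (inverse (q ^ t)) (Suc t) = 0"
    unfolding P_def using assms(2) by (simp add: prod_zero_iff)
  hence "qpoch_inf (q * q powi c) q = 0"
    using qinf_P[OF assms(1), of "inverse (q ^ t)" "Suc t"] e by simp
  thus ?thesis by (simp add: qpoch_def)
qed

lemma qinf_nz_int: assumes "norm q < 1" "q \<noteq> 0" "\<And>k::int. x * q powi k \<noteq> 1"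
  shows "qpoch_inf (x * q powi c) q \<noteq> 0"
proof (rule qinf_nz[OF assms(1)])
  fix k :: nat
  have "q powi (c + int k) = q powi c * q ^ k"
    using assms(2) by (simp add: power_int_add)
  hence "x * q powi c * q ^ k = x * q powi (c + int k)"
    by (simp add: mult.assoc)
  thus "x * q powi c * q ^ k \<noteq> 1" using assms(3)[of "c + int k"] by argo
qed



definition qb :: "complex \<Rightarrow> nat \<Rightarrow> nat \<Rightarrow> complex" where
  "qb q n k = (if k \<le> n then P q q n / (P q q k * P q q (n - k)) else 0)"

lemma qb_0[simp]: "norm q < 1 \<Longrightarrow> qb q n 0 = 1"
  by (simp add: qb_def Pq_nz)

lemma qb_gt[simp]: "n < k \<Longrightarrow> qb q n k = 0"
  by (simp add: qb_def)

lemma qb_diag: "norm q < 1 \<Longrightarrow> qb q n n = 1"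
  by (simp add: qb_def Pq_nz)

lemma alg_pas:
  fixes A B C a b :: complex
  assumes "A \<noteq> 0" "B \<noteq> 0" "a \<noteq> 0" "b \<noteq> 0"
  shows "C * (1 - (1 - a) * (1 - b)) / (A * a * (B * b)) = C / (A * a * B) + (1 - b) * (C / (A * (B * b)))"
    and "C * (1 - (1 - a) * (1 - b)) / (A * a * (B * b)) = (1 - a) * (C / (A * a * B)) + C / (A * (B * b))"
  using assms by (simp_all add: field_simps)

lemma qb_pas_core:
  assumes "norm q < 1"
  shows "qb q (Suc (k + m + 1)) (Suc k) = qb q (k + m + 1) (Suc k) + q ^ (m + 1) * qb q (k + m + 1) k"
    and "qb q (Suc (k + m + 1)) (Suc k) = q ^ Suc k * qb q (k + m + 1) (Suc k) + qb q (k + m + 1) k"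
proof -
  have nz: "\<And>n. P q q n \<noteq> 0" using Pq_nz[OF assms] .
  have e1: "Suc (k + m + 1) - Suc k = Suc m" "k + m + 1 - Suc k = m" "k + m + 1 - k = Suc m" by auto
  have s1: "P q q (Suc (k + m + 1)) = P q q (k + m + 1) * (1 - q * q ^ (k+m+1))" by (simp add: P_Suc)
  have s2: "P q q (Suc k) = P q q k * (1 - q * q ^ k)" by (simp add: P_Suc)
  have s3: "P q q (Suc m) = P q q m * (1 - q * q ^ m)" by (simp add: P_Suc)
  have n1: "1 - q * q ^ k \<noteq> 0" "1 - q * q ^ m \<noteq> 0" using qpow_ne1[OF assms] by auto
  have n2: "1 - q * q ^ (k + m + 1) \<noteq> 0" using qpow_ne1[OF assms, of "k+m+1"] by simp
  define A where "A = P q q k"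
  define B where "B = P q q m"
  define C where "C = P q q (k + m + 1)"
  have nzA: "A \<noteq> 0" "B \<noteq> 0" "C \<noteq> 0" using nz by (auto simp: A_def B_def C_def)
  have q1: "qb q (Suc (k + m + 1)) (Suc k) = C * (1 - q * q ^ (k + m + 1)) / (A * (1 - q * q ^ k) * (B * (1 - q * q ^ m)))"
    unfolding qb_def e1 A_def B_def C_def by (simp only: s1 s2 s3 if_True) simp
  have q2: "qb q (k + m + 1) (Suc k) = C / (A * (1 - q * q ^ k) * B)"
    unfolding qb_def e1 A_def B_def C_def by (simp only: s2 if_True) simp
  have q3: "qb q (k + m + 1) k = C / (A * (B * (1 - q * q ^ m)))"
    unfolding qb_def e1 A_def B_def C_def by (simp only: s3 if_True) simp
  have pw: "q ^ (k + m + 1) = q ^ k * q ^ m * q" by (simp add: power_add)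
  have pw2: "q * (q ^ k * q ^ m * q) = (1 - (1 - q * q ^ k)) * (1 - (1 - q * q ^ m))" by simp
  have pw3: "q ^ (m + 1) = 1 - (1 - q * q ^ m)" "q ^ Suc k = 1 - (1 - q * q ^ k)" by simp_all
  show "qb q (Suc (k + m + 1)) (Suc k) = qb q (k + m + 1) (Suc k) + q ^ (m + 1) * qb q (k + m + 1) k"
    unfolding q1 q2 q3 pw pw2 pw3 by (rule alg_pas(1)) (use nzA n1 in auto)
  show "qb q (Suc (k + m + 1)) (Suc k) = q ^ Suc k * qb q (k + m + 1) (Suc k) + qb q (k + m + 1) k"
    unfolding q1 q2 q3 pw pw2 pw3 by (rule alg_pas(2)) (use nzA n1 in auto)
qed

lemma qb_pas1:
  assumes "norm q < 1"
  shows "qb q (Suc n) (Suc k) = qb q n (Suc k) + q ^ (n - k) * qb q n k"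
proof (cases "k < n")
  case True
  then obtain m where "n = k + m + 1" by (metis add.commute add_Suc_right less_iff_Suc_add plus_1_eq_Suc)
  then show ?thesis using qb_pas_core(1)[OF assms, of k m] by simp
next
  case False
  then show ?thesis
    by (cases "k = n") (auto simp: qb_diag[OF assms])
qed

lemma qb_pas2:
  assumes "norm q < 1"
  shows "qb q (Suc n) (Suc k) = q ^ Suc k * qb q n (Suc k) + qb q n k"
proof (cases "k < n")
  case True
  then obtain m where "n = k + m + 1" by (metis add.commute add_Suc_right less_iff_Suc_add plus_1_eq_Suc)
  then show ?thesis using qb_pas_core(2)[OF assms, of k m] by simp
next
  case False
  then show ?thesis
    by (cases "k = n") (auto simp: qb_diag[OF assms])
qed

lemma sum_qb_Suc:
  "(\<Sum>k\<le>n. qb q n k * g k) = g' 0 + (\<Sum>k\<le>n. qb q n (Suc k) * g (Suc k))"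
  if "norm q < 1" "g' 0 = g 0"
proof -
  have "(\<Sum>k\<le>Suc n. qb q n k * g k) = qb q n 0 * g 0 + (\<Sum>k\<le>n. qb q n (Suc k) * g (Suc k))"
    by (rule sum.atMost_Suc_shift)
  moreover have "(\<Sum>k\<le>Suc n. qb q n k * g k) = (\<Sum>k\<le>n. qb q n k * g k)"
    by simp
  ultimately show ?thesis using that by simp
qed

lemma sum_pas1:
  assumes "norm q < 1"
  shows "(\<Sum>k\<le>Suc n. qb q (Suc n) k * g k) =
     (\<Sum>k\<le>n. qb q n k * g k) + (\<Sum>k\<le>n. q ^ (n - k) * qb q n k * g (Suc k))"
proof -
  have "(\<Sum>k\<le>Suc n. qb q (Suc n) k * g k) = qb q (Suc n) 0 * g 0 + (\<Sum>k\<le>n. qb q (Suc n) (Suc k) * g (Suc k))"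
    by (rule sum.atMost_Suc_shift)
  also have "\<dots> = g 0 + (\<Sum>k\<le>n. qb q n (Suc k) * g (Suc k)) + (\<Sum>k\<le>n. q ^ (n - k) * qb q n k * g (Suc k))"
    by (simp add: qb_pas1[OF assms] assms distrib_right sum.distrib)
  also have "g 0 + (\<Sum>k\<le>n. qb q n (Suc k) * g (Suc k)) = (\<Sum>k\<le>n. qb q n k * g k)"
    using sum_qb_Suc[OF assms, where g=g and n=n and g'=g] by simp
  finally show ?thesis .
qed

lemma sum_pas2:
  assumes "norm q < 1"
  shows "(\<Sum>k\<le>Suc n. qb q (Suc n) k * g k) =
     (\<Sum>k\<le>n. q ^ k * qb q n k * g k) + (\<Sum>k\<le>n. qb q n k * g (Suc k))"
proof -
  have "(\<Sum>k\<le>Suc n. qb q (Suc n) k * g k) = qb q (Suc n) 0 * g 0 + (\<Sum>k\<le>n. qb q (Suc n) (Suc k) * g (Suc k))"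
    by (rule sum.atMost_Suc_shift)
  also have "\<dots> = g 0 + (\<Sum>k\<le>n. q ^ Suc k * qb q n (Suc k) * g (Suc k)) + (\<Sum>k\<le>n. qb q n k * g (Suc k))"
    by (simp add: qb_pas2[OF assms] assms distrib_right sum.distrib)
  also have "g 0 + (\<Sum>k\<le>n. q ^ Suc k * qb q n (Suc k) * g (Suc k)) = (\<Sum>k\<le>n. q ^ k * qb q n k * g k)"
    using sum_qb_Suc[OF assms, where g="\<lambda>k. q ^ k * g k" and n=n and g'="\<lambda>k. q ^ k * g k"] assms
    by (simp add: mult.assoc mult.left_commute)
  finally show ?thesis .
qed



definition E :: "complex \<Rightarrow> complex \<Rightarrow> nat \<Rightarrow> complex" where
  "E q \<mu> k = (\<Prod>t<k. 1 - \<mu> / q ^ t)"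

lemma E_0[simp]: "E q \<mu> 0 = 1" by (simp add: E_def)

lemma E_Suc: "E q \<mu> (Suc k) = (1 - \<mu>) * E q (\<mu> / q) k"
  unfolding E_def by (subst prod.lessThan_Suc_shift) (simp add: divide_divide_eq_left mult.commute)

lemma C_gen:
  assumes q1: "norm q < 1" and q0: "q \<noteq> 0"
  shows "(\<Sum>k\<le>N. qb q N k * (E q \<mu> k * X ^ k * q ^ (k * k) * P q (X * q ^ (k + 1)) (N - k)))
         = P q (X * q * \<mu>) N"
proof (induction N arbitrary: X \<mu>)
  case 0
  then show ?case using q1 by simp
next
  case (Suc N)
  define g where "g k = E q \<mu> k * X ^ k * q ^ (k * k) * P q (X * q ^ (k + 1)) (Suc N - k)" for k
  define t where "t X' \<mu>' k = qb q N k * (E q \<mu>' k * X' ^ k * q ^ (k * k) * P q (X' * q ^ (k + 1)) (N - k))" for X' \<mu>' k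
  have h1: "qb q N k * g k = (1 - X * q ^ (N + 1)) * t X \<mu> k" if "k \<in> {..N}" for k
  proof -
    from that have k: "k \<le> N" by simp
    have e: "Suc N - k = Suc (N - k)" using k by simp
    have p: "X * q ^ (k + 1) * q ^ (N - k) = X * q ^ (N + 1)"
      using k by (simp add: mult.assoc power_add[symmetric])
    show ?thesis unfolding g_def t_def e P_Suc p by (simp add: algebra_simps)
  qed
  have h2: "q ^ (N - k) * qb q N k * g (Suc k) = ((1 - \<mu>) * (X * q ^ (N + 1))) * t (X * q) (\<mu> / q) k"
    if "k \<in> {..N}" for k
  proof -
    from that have k: "k \<le> N" by simp
    have e: "Suc N - Suc k = N - k" by simp
    have ex: "(N - k) + Suc k * Suc k = (N + 1) + k + k * k" using k
      by (simp add: algebra_simps)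
    have pw: "q ^ (N - k) * q ^ (Suc k * Suc k) = q ^ (N + 1) * q ^ k * q ^ (k * k)"
      by (simp only: power_add[symmetric] ex)
    have pp: "X * q ^ (Suc k + 1) = X * q * q ^ (k + 1)" by simp
    have "q ^ (N - k) * qb q N k * g (Suc k) =
      (q ^ (N - k) * q ^ (Suc k * Suc k)) * qb q N k * (E q \<mu> (Suc k) * X ^ Suc k * P q (X * q ^ (Suc k + 1)) (N - k))"
      unfolding g_def e by (simp add: algebra_simps)
    also have "\<dots> = ((1 - \<mu>) * (X * q ^ (N + 1))) * t (X * q) (\<mu> / q) k"
      unfolding pw pp t_def E_Suc by (simp add: algebra_simps power_mult_distrib)
    finally show ?thesis .
  qed
  have "(\<Sum>k\<le>Suc N. qb q (Suc N) k * g k) =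
     (\<Sum>k\<le>N. qb q N k * g k) + (\<Sum>k\<le>N. q ^ (N - k) * qb q N k * g (Suc k))"
    by (rule sum_pas1[OF q1])
  also have "\<dots> = (1 - X * q ^ (N + 1)) * (\<Sum>k\<le>N. t X \<mu> k)
      + ((1 - \<mu>) * (X * q ^ (N + 1))) * (\<Sum>k\<le>N. t (X * q) (\<mu> / q) k)"
    by (simp only: sum.cong[OF refl h1] sum.cong[OF refl h2] sum_distrib_left)
  also have "(\<Sum>k\<le>N. t X \<mu> k) = P q (X * q * \<mu>) N" unfolding t_def by (rule Suc.IH)
  also have "(\<Sum>k\<le>N. t (X * q) (\<mu> / q) k) = P q (X * q * \<mu>) N"
  proof -
    have "X * q * q * (\<mu> / q) = X * q * \<mu>" using q0 by simp
    thus ?thesis unfolding t_def using Suc.IH[where X="X * q" and \<mu>="\<mu> / q"] by simp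
  qed
  also have "(1 - X * q ^ (N + 1)) * P q (X * q * \<mu>) N + (1 - \<mu>) * (X * q ^ (N + 1)) * P q (X * q * \<mu>) N
      = P q (X * q * \<mu>) (Suc N)"
    by (simp add: P_Suc algebra_simps)
  finally show ?case unfolding g_def by simp
qed



lemma qb_Suc_P:
  assumes "norm q < 1"
  shows "qb q (Suc n) (Suc k) * P q q (Suc k) = (1 - q * q ^ n) * (qb q n k * P q q k)"
proof (cases "k \<le> n")
  case True
  have nz: "\<And>n. P q q n \<noteq> 0" using Pq_nz[OF assms] .
  have e: "Suc n - Suc k = n - k" by simp
  have "qb q (Suc n) (Suc k) * P q q (Suc k) = P q q (Suc n) / P q q (n - k)"
    using True nz unfolding qb_def e by simp
  also have "\<dots> = (1 - q * q ^ n) * (qb q n k * P q q k)"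
    using True nz unfolding qb_def P_Suc[of q q n] by (simp add: field_simps)
  finally show ?thesis .
qed (simp add: qb_def)

lemma cancel3: fixes a :: complex shows "a \<noteq> 0 \<Longrightarrow> a * A * (a * B) / (a * C) = a * (A * B / C)"
  by (simp add: field_simps)

lemma A_lem:
  assumes q1: "norm q < 1" and q0: "q \<noteq> 0"
  shows "(\<forall>t. x * q ^ t \<noteq> 1) \<Longrightarrow> (\<Sum>k\<le>j. qb q j k * (qb q i k * P q q k * q ^ ((i - k) * (j - k)) *
            (P q x i * P q x j / P q x k))) = P q x (i + j)"
proof (induction j arbitrary: i x)
  case 0
  then show ?case using q1 by simp
next
  case (Suc j)
  have x1: "1 - x \<noteq> 0" using Suc.prems[rule_format, of 0] by simp
  have xj: "1 - x * q ^ j \<noteq> 0" using Suc.prems[rule_format, of j] by simp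
  define g where "g k = qb q i k * P q q k * q ^ ((i - k) * (Suc j - k)) * (P q x i * P q x (Suc j) / P q x k)" for k
  define t where "t i' x' k = qb q j k * (qb q i' k * P q q k * q ^ ((i' - k) * (j - k)) *
            (P q x' i' * P q x' j / P q x' k))" for i' x' k
  have h1: "q ^ k * qb q j k * g k = (q ^ i * (1 - x * q ^ j)) * t i x k" if "k \<in> {..j}" for k
  proof (cases "k \<le> i")
    case True
    from that have k: "k \<le> j" by simp
    have e: "Suc j - k = Suc (j - k)" using k by simp
    have ex: "k + (i - k) * Suc (j - k) = i + (i - k) * (j - k)" using True by (simp add: algebra_simps)
    have pw: "q ^ k * q ^ ((i - k) * Suc (j - k)) = q ^ i * q ^ ((i - k) * (j - k))"
      by (simp only: power_add[symmetric] ex)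
    have "q ^ k * qb q j k * g k = (q ^ k * q ^ ((i - k) * Suc (j - k))) * qb q j k *
       (qb q i k * P q q k * (P q x i * (P q x j * (1 - x * q ^ j)) / P q x k))"
      unfolding g_def e P_Suc by (simp add: algebra_simps)
    also have "\<dots> = (q ^ i * (1 - x * q ^ j)) * t i x k"
      unfolding pw t_def by (simp add: algebra_simps)
    finally show ?thesis .
  next
    case False
    then show ?thesis by (simp add: g_def t_def)
  qed
  have sum1: "(\<Sum>k\<le>j. q ^ k * qb q j k * g k) = (q ^ i * (1 - x * q ^ j)) * P q x (i + j)"
  proof -
    have "(\<Sum>k\<le>j. q ^ k * qb q j k * g k) = (\<Sum>k\<le>j. (q ^ i * (1 - x * q ^ j)) * t i x k)"
      by (rule sum.cong[OF refl h1])
    also have "\<dots> = (q ^ i * (1 - x * q ^ j)) * (\<Sum>k\<le>j. t i x k)" by (simp add: sum_distrib_left)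
    also have "(\<Sum>k\<le>j. t i x k) = P q x (i + j)" unfolding t_def by (rule Suc.IH[OF Suc.prems])
    finally show ?thesis .
  qed
  show ?case
  proof (cases i)
    case 0
    have "(\<Sum>k\<le>j. qb q j k * g (Suc k)) = 0" by (simp add: g_def 0)
    moreover have "(\<Sum>k\<le>Suc j. qb q (Suc j) k * g k) =
       (\<Sum>k\<le>j. q ^ k * qb q j k * g k) + (\<Sum>k\<le>j. qb q j k * g (Suc k))"
      by (rule sum_pas2[OF q1])
    ultimately have "(\<Sum>k\<le>Suc j. qb q (Suc j) k * g k) = P q x (i + Suc j)"
      using sum1 by (simp add: 0 P_Suc)
    thus ?thesis unfolding g_def by (simp add: algebra_simps)
  next
    case (Suc i')
    have prem': "\<forall>t. x * q * q ^ t \<noteq> 1"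
      using Suc.prems by (metis mult.assoc power_Suc)
    have h2: "qb q j k * g (Suc k) = ((1 - q * q ^ i') * (1 - x)) * t i' (x * q) k" for k
    proof -
      have e: "Suc j - Suc k = j - k" "i - Suc k = i' - k" using Suc by auto
      have "qb q j k * g (Suc k) = qb q j k * (qb q (Suc i') (Suc k) * P q q (Suc k)) * q ^ ((i' - k) * (j - k))
          * (P q x (Suc i') * P q x (Suc j) / P q x (Suc k))"
        unfolding g_def e Suc by (simp add: algebra_simps)
      also have "\<dots> = ((1 - q * q ^ i') * (1 - x)) * t i' (x * q) k"
        unfolding qb_Suc_P[OF q1] unfolding P_Suc' cancel3[OF x1] t_def by (simp only: mult_ac)
      finally show ?thesis .
    qed
    have sum2: "(\<Sum>k\<le>j. qb q j k * g (Suc k)) = ((1 - q * q ^ i') * (1 - x)) * P q (x * q) (i' + j)"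
    proof -
      have "(\<Sum>k\<le>j. qb q j k * g (Suc k)) = (\<Sum>k\<le>j. ((1 - q * q ^ i') * (1 - x)) * t i' (x * q) k)"
        by (rule sum.cong[OF refl h2])
      also have "\<dots> = ((1 - q * q ^ i') * (1 - x)) * (\<Sum>k\<le>j. t i' (x * q) k)" by (simp add: sum_distrib_left)
      also have "(\<Sum>k\<le>j. t i' (x * q) k) = P q (x * q) (i' + j)" unfolding t_def by (rule Suc.IH[OF prem'])
      finally show ?thesis .
    qed
    have "(\<Sum>k\<le>Suc j. qb q (Suc j) k * g k) =
       (\<Sum>k\<le>j. q ^ k * qb q j k * g k) + (\<Sum>k\<le>j. qb q j k * g (Suc k))"
      by (rule sum_pas2[OF q1])
    also have "\<dots> = P q x (i + Suc j)"
    proof -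
      have a1: "P q x (Suc i' + j) = (1 - x) * P q (x * q) (i' + j)" by (simp add: P_Suc')
      have a2: "P q x (Suc i' + Suc j) = P q x (Suc i' + j) * (1 - x * q ^ (Suc i' + j))"
        by (metis P_Suc add_Suc_right)
      show ?thesis unfolding sum1 sum2 Suc a2 a1
        by (simp add: algebra_simps power_add)
    qed
    finally show ?thesis unfolding g_def by (simp add: algebra_simps)
  qed
qed



definition ri :: "complex \<Rightarrow> nat \<Rightarrow> nat \<Rightarrow> complex" where
  "ri q M k = (if k \<le> M then 1 / P q q (M - k) else 0)"

lemma Pnz_gen: "(\<forall>t. a * q ^ t \<noteq> 1) \<Longrightarrow> P q a n \<noteq> 0"
  by (rule P_nz) auto

lemma B_lem:
  assumes q1: "norm q < 1" and q0: "q \<noteq> 0" and hY: "\<forall>t. Y * q * q ^ t \<noteq> 1"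
  shows "(\<Sum>u\<le>L. Y ^ u * q ^ (u * u) / (P q q u * P q q (L - u) * P q (Y * q) u))
         = 1 / (P q q L * P q (Y * q) L)"
proof -
  have nzq: "\<And>n. P q q n \<noteq> 0" using Pq_nz[OF q1] .
  have nzY: "\<And>n. P q (Y * q) n \<noteq> 0" using Pnz_gen[OF hY] .
  define K where "K = P q q L * P q (Y * q) L"
  have K0: "K \<noteq> 0" using nzq nzY by (simp add: K_def)
  have t: "qb q L u * (E q 0 u * Y ^ u * q ^ (u * u) * P q (Y * q ^ (u + 1)) (L - u))
        = K * (Y ^ u * q ^ (u * u) / (P q q u * P q q (L - u) * P q (Y * q) u))" if "u \<in> {..L}" for u
  proof -
    from that have u: "u \<le> L" by simp
    have E0: "E q 0 u = 1" by (simp add: E_def)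
    have pa: "P q (Y * q) L = P q (Y * q) u * P q (Y * q ^ (u + 1)) (L - u)"
      using P_add[of q "Y * q" u "L - u"] u by (simp add: mult.assoc mult.commute)
    show ?thesis unfolding K_def pa qb_def E0 using u nzq nzY
      by (simp add: field_simps)
  qed
  have cg: "(\<Sum>u\<le>L. qb q L u * (E q 0 u * Y ^ u * q ^ (u * u) * P q (Y * q ^ (u + 1)) (L - u))) = P q (Y * q * 0) L"
    by (rule C_gen[OF q1 q0])
  have p0: "P q (Y * q * 0) L = 1" by (simp add: P_def)
  have s: "(\<Sum>u\<le>L. qb q L u * (E q 0 u * Y ^ u * q ^ (u * u) * P q (Y * q ^ (u + 1)) (L - u)))
     = (\<Sum>u\<le>L. K * (Y ^ u * q ^ (u * u) / (P q q u * P q q (L - u) * P q (Y * q) u)))"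
    by (rule sum.cong[OF refl t])
  have "(\<Sum>u\<le>L. K * (Y ^ u * q ^ (u * u) / (P q q u * P q q (L - u) * P q (Y * q) u))) = 1"
    using trans[OF trans[OF s[symmetric] cg] p0] .
  hence "K * (\<Sum>u\<le>L. Y ^ u * q ^ (u * u) / (P q q u * P q q (L - u) * P q (Y * q) u)) = 1"
    by (simp add: sum_distrib_left)
  thus ?thesis using K0 unfolding K_def[symmetric] by (simp add: field_simps)
qed

lemma E_qM:
  assumes q1: "norm q < 1" and q0: "q \<noteq> 0"
  shows "E q (q ^ M) k = P q q M * ri q M k"
proof (induction k)
  case 0
  then show ?case using Pq_nz[OF q1] by (simp add: ri_def)
next
  case (Suc k)
  have ES: "E q (q ^ M) (Suc k) = E q (q ^ M) k * (1 - q ^ M / q ^ k)" by (simp add: E_def)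
  consider "Suc k \<le> M" | "k = M" | "M < k" by linarith
  then show ?case
  proof cases
    case 1
    have e: "M - k = Suc (M - Suc k)" using 1 by simp
    have pw: "q ^ M / q ^ k = q * q ^ (M - Suc k)"
      using 1 q0 by (simp add: power_diff[symmetric] e)
    have n1: "P q q (M - Suc k) \<noteq> 0" using Pq_nz[OF q1] .
    have n2: "1 - q * q ^ (M - Suc k) \<noteq> 0" using qpow_ne1[OF q1, of "M - Suc k"] by simp
    show ?thesis unfolding ES Suc.IH pw using 1 n1 n2 by (simp add: ri_def e P_Suc field_simps)
  next
    case 2
    then show ?thesis unfolding ES using q0 by (simp add: ri_def)
  next
    case 3
    then show ?thesis unfolding ES Suc.IH by (simp add: ri_def)
  qed
qed

lemma C_lem:
  assumes q1: "norm q < 1" and q0: "q \<noteq> 0" and hX: "\<forall>t. X * q * q ^ t \<noteq> 1"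
  shows "(\<Sum>k\<le>M. ri q N k * X ^ k * q ^ (k * k) / (P q q k * P q q (M - k) * P q (X * q) k))
         = P q (X * q) (N + M) / (P q q N * P q q M * P q (X * q) N * P q (X * q) M)"
proof -
  have nzq: "\<And>n. P q q n \<noteq> 0" using Pq_nz[OF q1] .
  have nzX: "\<And>n. P q (X * q) n \<noteq> 0" using Pnz_gen[OF hX] .
  define K where "K = P q q M * P q q N * P q (X * q) M"
  have K0: "K \<noteq> 0" using nzq nzX by (simp add: K_def)
  have t: "qb q M k * (E q (q ^ N) k * X ^ k * q ^ (k * k) * P q (X * q ^ (k + 1)) (M - k))
        = K * (ri q N k * X ^ k * q ^ (k * k) / (P q q k * P q q (M - k) * P q (X * q) k))" if "k \<in> {..M}" for k
  proof -
    from that have u: "k \<le> M" by simp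
    have pa: "P q (X * q) M = P q (X * q) k * P q (X * q ^ (k + 1)) (M - k)"
      using P_add[of q "X * q" k "M - k"] u by (simp add: mult.assoc mult.commute)
    show ?thesis unfolding K_def pa qb_def E_qM[OF q1 q0] using u nzq nzX
      by (simp add: field_simps)
  qed
  have pN: "P q (X * q) (N + M) = P q (X * q) N * P q (X * q * q ^ N) M" by (rule P_add)
  have cg: "(\<Sum>k\<le>M. qb q M k * (E q (q ^ N) k * X ^ k * q ^ (k * k) * P q (X * q ^ (k + 1)) (M - k))) = P q (X * q * q ^ N) M"
    by (rule C_gen[OF q1 q0])
  have s: "(\<Sum>k\<le>M. qb q M k * (E q (q ^ N) k * X ^ k * q ^ (k * k) * P q (X * q ^ (k + 1)) (M - k)))
    = (\<Sum>k\<le>M. K * (ri q N k * X ^ k * q ^ (k * k) / (P q q k * P q q (M - k) * P q (X * q) k)))"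
    by (rule sum.cong[OF refl t])
  have "(\<Sum>k\<le>M. K * (ri q N k * X ^ k * q ^ (k * k) / (P q q k * P q q (M - k) * P q (X * q) k))) = P q (X * q * q ^ N) M"
    using trans[OF s[symmetric] cg] .
  hence "K * (\<Sum>k\<le>M. ri q N k * X ^ k * q ^ (k * k) / (P q q k * P q q (M - k) * P q (X * q) k)) = P q (X * q * q ^ N) M"
    by (simp add: sum_distrib_left)
  thus ?thesis using K0 nzq nzX unfolding pN K_def by (simp add: field_simps)
qed



lemma sum_shift_k:
  fixes f :: "nat \<Rightarrow> complex"
  assumes "k \<le> N" "\<And>i. i < k \<Longrightarrow> f i = 0"
  shows "(\<Sum>i\<le>N. f i) = (\<Sum>u\<le>N - k. f (k + u))"
proof -
  have "{..N} = {..<k} \<union> {k..N}" using assms(1) by auto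
  hence "(\<Sum>i\<le>N. f i) = (\<Sum>i<k. f i) + (\<Sum>i\<in>{k..N}. f i)"
    by (simp add: sum.union_disjoint ivl_disj_int)
  also have "(\<Sum>i<k. f i) = 0" using assms(2) by simp
  also have "(\<Sum>i\<in>{k..N}. f i) = (\<Sum>u\<in>{0..N - k}. f (u + k))"
    using sum.shift_bounds_cl_nat_ivl[of f 0 k "N - k"] assms(1) by simp
  also have "\<dots> = (\<Sum>u\<le>N - k. f (k + u))" by (simp add: atLeast0AtMost add.commute)
  finally show ?thesis by simp
qed

lemma Asum:
  assumes q1: "norm q < 1" and q0: "q \<noteq> 0" and hZ: "\<forall>t. Z * q * q ^ t \<noteq> 1"
  shows "(\<Sum>i\<le>N. qb q i k * Z ^ i * q ^ (i * (i - k)) / (P q q (N - i) * P q q i * P q (Z * q) i))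
        = ri q N k * Z ^ k / (P q q k * P q (Z * q) N)"
proof (cases "k \<le> N")
  case True
  have nzq: "\<And>n. P q q n \<noteq> 0" using Pq_nz[OF q1] .
  have nzZ: "\<And>n. P q (Z * q) n \<noteq> 0" using Pnz_gen[OF hZ] .
  have hY: "\<forall>t. Z * q ^ k * q * q ^ t \<noteq> 1"
  proof
    fix t
    have "Z * q ^ k * q * q ^ t = Z * q * q ^ (k + t)" by (simp add: power_add mult_ac)
    thus "Z * q ^ k * q * q ^ t \<noteq> 1" using hZ by metis
  qed
  have nzY: "\<And>n. P q (Z * q ^ k * q) n \<noteq> 0" using Pnz_gen[OF hY] .
  have "(\<Sum>i\<le>N. qb q i k * Z ^ i * q ^ (i * (i - k)) / (P q q (N - i) * P q q i * P q (Z * q) i))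
     = (\<Sum>u\<le>N - k. qb q (k + u) k * Z ^ (k + u) * q ^ ((k + u) * (k + u - k)) / (P q q (N - (k + u)) * P q q (k + u) * P q (Z * q) (k + u)))"
    by (rule sum_shift_k[OF True]) simp
  also have "\<dots> = (\<Sum>u\<le>N - k. (Z ^ k / (P q q k * P q (Z * q) k)) *
        ((Z * q ^ k) ^ u * q ^ (u * u) / (P q q u * P q q (N - k - u) * P q (Z * q ^ k * q) u)))"
  proof (rule sum.cong[OF refl])
    fix u assume "u \<in> {..N - k}"
    have e1: "k + u - k = u" "N - (k + u) = N - k - u" by auto
    have pw: "q ^ ((k + u) * u) = q ^ (k * u) * q ^ (u * u)" by (simp add: power_add algebra_simps)
    have pa: "P q (Z * q) (k + u) = P q (Z * q) k * P q (Z * q ^ k * q) u"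
      by (simp add: P_add mult_ac)
    show "qb q (k + u) k * Z ^ (k + u) * q ^ ((k + u) * (k + u - k)) / (P q q (N - (k + u)) * P q q (k + u) * P q (Z * q) (k + u))
       = (Z ^ k / (P q q k * P q (Z * q) k)) *
        ((Z * q ^ k) ^ u * q ^ (u * u) / (P q q u * P q q (N - k - u) * P q (Z * q ^ k * q) u))"
      unfolding e1 pw pa qb_def using nzq nzZ nzY
      by (simp add: field_simps power_add power_mult_distrib power_mult)
  qed
  also have "\<dots> = (Z ^ k / (P q q k * P q (Z * q) k)) *
        (\<Sum>u\<le>N - k. (Z * q ^ k) ^ u * q ^ (u * u) / (P q q u * P q q (N - k - u) * P q (Z * q ^ k * q) u))"
    by (simp add: sum_distrib_left)
  also have "(\<Sum>u\<le>N - k. (Z * q ^ k) ^ u * q ^ (u * u) / (P q q u * P q q (N - k - u) * P q (Z * q ^ k * q) u))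
      = 1 / (P q q (N - k) * P q (Z * q ^ k * q) (N - k))"
    by (rule B_lem[OF q1 q0 hY])
  also have "(Z ^ k / (P q q k * P q (Z * q) k)) * (1 / (P q q (N - k) * P q (Z * q ^ k * q) (N - k)))
      = ri q N k * Z ^ k / (P q q k * P q (Z * q) N)"
  proof -
    have pa: "P q (Z * q) N = P q (Z * q) k * P q (Z * q ^ k * q) (N - k)"
      using P_add[of q "Z * q" k "N - k"] True by (simp add: mult_ac)
    show ?thesis unfolding pa ri_def using True nzq nzZ nzY by (simp add: field_simps)
  qed
  finally show ?thesis .
next
  case False
  then show ?thesis by (simp add: ri_def)
qed



lemma core:
  assumes q1: "norm q < 1" and q0: "q \<noteq> 0"
    and hZ: "\<forall>t. Z * q * q ^ t \<noteq> 1" and hW: "\<forall>t. W * q * q ^ t \<noteq> 1"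
    and hU: "\<forall>t. Z * W * q * q ^ t \<noteq> 1"
  shows "(\<Sum>i\<le>N. \<Sum>j\<le>M. Z ^ i * W ^ j * q ^ (i * i + j * j) / q ^ (i * j) * P q (Z * W * q) (i + j) /
            (P q q (N - i) * P q q (M - j) * P q q i * P q (Z * q) i * P q (Z * W * q) i *
             P q q j * P q (W * q) j * P q (Z * W * q) j))
       = P q (Z * W * q) (N + M) / (P q q N * P q q M * P q (Z * q) N * P q (Z * W * q) N *
             P q (W * q) M * P q (Z * W * q) M)"
proof -
  define U where "U = Z * W * q"
  have nzq: "\<And>n. P q q n \<noteq> 0" using Pq_nz[OF q1] .
  have nzZ: "\<And>n. P q (Z * q) n \<noteq> 0" using Pnz_gen[OF hZ] .
  have nzW: "\<And>n. P q (W * q) n \<noteq> 0" using Pnz_gen[OF hW] .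
  have nzU: "\<And>n. P q U n \<noteq> 0" using Pnz_gen[OF hU] unfolding U_def .
  have hU': "\<forall>t. U * q ^ t \<noteq> 1"
  proof
    fix t
    show "U * q ^ t \<noteq> 1" using hU[rule_format, of t] by (simp add: U_def)
  qed
  define a where "a i k = qb q i k * Z ^ i * q ^ (i * (i - k)) / (P q q (N - i) * P q q i * P q (Z * q) i)" for i k
  define b where "b j k = qb q j k * W ^ j * q ^ (j * (j - k)) / (P q q (M - j) * P q q j * P q (W * q) j)" for j k
  define c where "c k = P q q k * q ^ (k * k) / P q U k" for k
  have T: "Z ^ i * W ^ j * q ^ (i * i + j * j) / q ^ (i * j) * P q U (i + j) /
            (P q q (N - i) * P q q (M - j) * P q q i * P q (Z * q) i * P q U i *
             P q q j * P q (W * q) j * P q U j)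
        = (\<Sum>k\<le>M. c k * a i k * b j k)" if "i \<in> {..N}" "j \<in> {..M}" for i j
  proof -
    from that have jM: "j \<le> M" by simp
    define X where "X = Z ^ i * W ^ j * q ^ (i * i + j * j) / q ^ (i * j) /
            (P q q (N - i) * P q q (M - j) * P q q i * P q (Z * q) i * P q U i *
             P q q j * P q (W * q) j * P q U j)"
    define f where "f k = qb q i k * P q q k * q ^ ((i - k) * (j - k)) * (P q U i * P q U j / P q U k)" for k
    have "P q U (i + j) = (\<Sum>k\<le>j. qb q j k * f k)"
      unfolding f_def by (rule A_lem[OF q1 q0 hU', symmetric])
    also have "\<dots> = (\<Sum>k\<le>M. qb q j k * f k)"
      by (rule sum.mono_neutral_left) (use jM in auto)
    finally have PU: "P q U (i + j) = (\<Sum>k\<le>M. qb q j k * f k)" .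
    have "Z ^ i * W ^ j * q ^ (i * i + j * j) / q ^ (i * j) * P q U (i + j) /
            (P q q (N - i) * P q q (M - j) * P q q i * P q (Z * q) i * P q U i *
             P q q j * P q (W * q) j * P q U j) = X * P q U (i + j)"
      unfolding X_def by simp
    also have "\<dots> = (\<Sum>k\<le>M. X * (qb q j k * f k))" unfolding PU by (simp add: sum_distrib_left)
    also have "\<dots> = (\<Sum>k\<le>M. c k * a i k * b j k)"
    proof (rule sum.cong[OF refl])
      fix k assume "k \<in> {..M}"
      show "X * (qb q j k * f k) = c k * a i k * b j k"
      proof (cases "k \<le> i \<and> k \<le> j")
        case True
        then obtain u v where uv: "i = k + u" "j = k + v" by (metis le_Suc_ex)
        have ex: "i * i + j * j + (i - k) * (j - k) = i * j + (i * (i - k) + j * (j - k) + k * k)"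
          unfolding uv by (simp add: algebra_simps)
        have pw: "q ^ (i * i + j * j) * q ^ ((i - k) * (j - k)) = q ^ (i * j) * (q ^ (i * (i - k)) * q ^ (j * (j - k)) * q ^ (k * k))"
          by (simp only: power_add[symmetric] ex)
        have pw': "q ^ (i * i + j * j) / q ^ (i * j) * q ^ ((i - k) * (j - k)) = q ^ (i * (i - k)) * q ^ (j * (j - k)) * q ^ (k * k)"
          using pw q0 by (simp add: field_simps)
        have "X * (qb q j k * f k) = (q ^ (i * i + j * j) / q ^ (i * j) * q ^ ((i - k) * (j - k))) *
            (Z ^ i * W ^ j * qb q i k * qb q j k * P q q k / P q U k /
            (P q q (N - i) * P q q (M - j) * P q q i * P q (Z * q) i * P q q j * P q (W * q) j))"
          unfolding X_def f_def using nzq nzZ nzW nzU by (simp add: field_simps)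
        also have "\<dots> = c k * a i k * b j k"
          unfolding pw' a_def b_def c_def using nzq nzZ nzW nzU by (simp add: field_simps)
        finally show ?thesis .
      next
        case False
        then show ?thesis by (auto simp: a_def b_def f_def)
      qed
    qed
    finally show ?thesis .
  qed
  have "(\<Sum>i\<le>N. \<Sum>j\<le>M. Z ^ i * W ^ j * q ^ (i * i + j * j) / q ^ (i * j) * P q U (i + j) /
            (P q q (N - i) * P q q (M - j) * P q q i * P q (Z * q) i * P q U i *
             P q q j * P q (W * q) j * P q U j))
      = (\<Sum>i\<le>N. \<Sum>j\<le>M. \<Sum>k\<le>M. c k * a i k * b j k)"
    by (intro sum.cong[OF refl] T)
  also have "\<dots> = (\<Sum>i\<le>N. \<Sum>k\<le>M. \<Sum>j\<le>M. c k * a i k * b j k)"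
    by (rule sum.cong[OF refl], rule sum.swap)
  also have "\<dots> = (\<Sum>k\<le>M. \<Sum>i\<le>N. \<Sum>j\<le>M. c k * a i k * b j k)"
    by (rule sum.swap)
  also have "\<dots> = (\<Sum>k\<le>M. c k * (\<Sum>i\<le>N. a i k) * (\<Sum>j\<le>M. b j k))"
  proof (rule sum.cong[OF refl])
    fix k
    have "c k * (\<Sum>i\<le>N. a i k) * (\<Sum>j\<le>M. b j k) = c k * ((\<Sum>i\<le>N. a i k) * (\<Sum>j\<le>M. b j k))"
      by (rule mult.assoc)
    also have "\<dots> = c k * (\<Sum>i\<le>N. \<Sum>j\<le>M. a i k * b j k)" by (simp only: sum_product)
    also have "\<dots> = (\<Sum>i\<le>N. \<Sum>j\<le>M. c k * (a i k * b j k))" by (simp only: sum_distrib_left)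
    also have "\<dots> = (\<Sum>i\<le>N. \<Sum>j\<le>M. c k * a i k * b j k)" by (simp only: mult.assoc)
    finally show "(\<Sum>i\<le>N. \<Sum>j\<le>M. c k * a i k * b j k) = c k * (\<Sum>i\<le>N. a i k) * (\<Sum>j\<le>M. b j k)" by simp
  qed
  also have "\<dots> = (\<Sum>k\<le>M. c k * (ri q N k * Z ^ k / (P q q k * P q (Z * q) N)) * (ri q M k * W ^ k / (P q q k * P q (W * q) M)))"
    unfolding a_def b_def Asum[OF q1 q0 hZ] Asum[OF q1 q0 hW] ..
  also have "\<dots> = (1 / (P q (Z * q) N * P q (W * q) M)) *
      (\<Sum>k\<le>M. ri q N k * (Z * W) ^ k * q ^ (k * k) / (P q q k * P q q (M - k) * P q (Z * W * q) k))"
    unfolding sum_distrib_left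
  proof (rule sum.cong[OF refl])
    fix k assume "k \<in> {..M}"
    hence kM: "k \<le> M" by simp
    show "c k * (ri q N k * Z ^ k / (P q q k * P q (Z * q) N)) * (ri q M k * W ^ k / (P q q k * P q (W * q) M))
        = 1 / (P q (Z * q) N * P q (W * q) M) *
          (ri q N k * (Z * W) ^ k * q ^ (k * k) / (P q q k * P q q (M - k) * P q (Z * W * q) k))"
      unfolding c_def U_def using kM nzq nzZ nzW nzU[unfolded U_def]
      by (simp add: ri_def field_simps power_mult_distrib)
  qed
  also have "(\<Sum>k\<le>M. ri q N k * (Z * W) ^ k * q ^ (k * k) / (P q q k * P q q (M - k) * P q (Z * W * q) k))
      = P q (Z * W * q) (N + M) / (P q q N * P q q M * P q (Z * W * q) N * P q (Z * W * q) M)"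
    by (rule C_lem[OF q1 q0 hU])
  also have "1 / (P q (Z * q) N * P q (W * q) M) * (P q (Z * W * q) (N + M) / (P q q N * P q q M * P q (Z * W * q) N * P q (Z * W * q) M))
     = P q (Z * W * q) (N + M) / (P q q N * P q q M * P q (Z * q) N * P q (Z * W * q) N *
             P q (W * q) M * P q (Z * W * q) M)"
    by (simp add: field_simps)
  finally show ?thesis unfolding U_def .
qed



lemma sum_int_ivl:
  "(\<Sum>r\<in>{a..a + int N}. f r) = (\<Sum>i\<le>N. f (a + int i))"
  by (rule sum.reindex_bij_witness[where i="\<lambda>i. a + int i" and j="\<lambda>r. nat (r - a)"]) auto

lemma qq_nat: assumes q1: "norm q < 1" shows "qpoch q q (int n) = P q q n"
proof (rule qpoch_nat[OF q1])
  show "qpoch_inf (q * q ^ n) q \<noteq> 0"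
  proof (rule qinf_nz[OF q1])
    fix k :: nat
    have "q * q ^ n * q ^ k = q * q ^ (n + k)" by (simp add: power_add)
    thus "q * q ^ n * q ^ k \<noteq> 1" using qpow_ne1[OF q1, of "n + k"] by argo
  qed
qed

lemma qp_shift:
  assumes q1: "norm q < 1" and q0: "q \<noteq> 0" and hx: "\<And>k::int. x * q powi k \<noteq> 1"
  shows "qpoch (x * q) q (c + int n) = qpoch (x * q) q c * P q (x * q powi (c + 1)) n"
proof -
  have e: "x * q * q powi c = x * q powi (c + 1)" using q0 by (simp add: power_int_add mult_ac)
  have nz: "qpoch_inf (x * q * q powi c) q \<noteq> 0" unfolding e by (rule qinf_nz_int[OF q1 q0 hx])
  have e2: "x * q powi (c + 1) * q ^ n = x * q powi (c + 1 + int n)" using q0 by (simp add: power_int_add mult_ac)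
  have nz2: "qpoch_inf (x * q powi (c + 1) * q ^ n) q \<noteq> 0" unfolding e2 by (rule qinf_nz_int[OF q1 q0 hx])
  show ?thesis unfolding qpoch_add[OF q0 nz] e qpoch_nat[OF q1 nz2] ..
qed

lemma kpow:
  fixes z w q :: complex and a b :: int
  assumes q0: "q \<noteq> 0" and z0: "z \<noteq> 0" and w0: "w \<noteq> 0"
  shows "z powi (a + int i) * w powi (b + int j) *
      q powi ((a + int i) * (a + int i) - (a + int i) * (b + int j) + (b + int j) * (b + int j))
    = (z powi a * w powi b * q powi (a * a - a * b + b * b)) *
      ((z * q powi (2 * a - b)) ^ i * (w * q powi (2 * b - a)) ^ j * q ^ (i * i + j * j) / q ^ (i * j))"
proof -
  have 1: "z powi (a + int i) = z powi a * z ^ i" using z0 by (simp add: power_int_add)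
  have 2: "w powi (b + int j) = w powi b * w ^ j" using w0 by (simp add: power_int_add)
  have 3: "(z * q powi (2 * a - b)) ^ i = z ^ i * q powi ((2 * a - b) * int i)"
    by (simp add: power_mult_distrib power_int_power')
  have 4: "(w * q powi (2 * b - a)) ^ j = w ^ j * q powi ((2 * b - a) * int j)"
    by (simp add: power_mult_distrib power_int_power')
  have 5: "q ^ (i * i + j * j) / q ^ (i * j) = q powi (int (i * i + j * j) - int (i * j))"
    by (subst power_int_diff) (use q0 in \<open>simp_all only: power_int_of_nat simp_thms\<close>)
  have ex: "(a + int i) * (a + int i) - (a + int i) * (b + int j) + (b + int j) * (b + int j)
     = (a * a - a * b + b * b) + ((2 * a - b) * int i + ((2 * b - a) * int j + (int (i * i + j * j) - int (i * j))))"
    by (simp add: algebra_simps)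
  have 6: "q powi ((a + int i) * (a + int i) - (a + int i) * (b + int j) + (b + int j) * (b + int j))
     = q powi (a * a - a * b + b * b) * (q powi ((2 * a - b) * int i) * (q powi ((2 * b - a) * int j) *
        q powi (int (i * i + j * j) - int (i * j))))"
    unfolding ex using q0 by (simp only: power_int_add simp_thms)
  show ?thesis unfolding 1 2 3 4 6 5[symmetric] by (simp add: mult_ac)
qed



lemma phi_dec:
  fixes z w q :: complex and a b :: int
  assumes q1: "norm q < 1" and q0: "q \<noteq> 0"
    and hz: "\<And>k::int. z * (q powi k) \<noteq> 1"
    and hw: "\<And>k::int. w * (q powi k) \<noteq> 1"
    and hzw: "\<And>k::int. z * w * (q powi k) \<noteq> 1"
  shows "Phi (a + int i) (b + int j) a (b - a) (- b) z w q =
     (qpoch (z * w * q) q (a + b) / (qpoch (z * q) q (2 * a - b) * qpoch (z * w * q) q (a + b) *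
        qpoch (w * q) q (2 * b - a) * qpoch (z * w * q) q (a + b))) *
     (P q (z * q powi (2 * a - b) * (w * q powi (2 * b - a)) * q) (i + j) /
       (P q q i * P q (z * q powi (2 * a - b) * q) i * P q (z * q powi (2 * a - b) * (w * q powi (2 * b - a)) * q) i *
        P q q j * P q (w * q powi (2 * b - a) * q) j * P q (z * q powi (2 * a - b) * (w * q powi (2 * b - a)) * q) j))"
proof -
  have i1: "a + int i + (b + int j) = (a + b) + int (i + j)" by simp
  have i2: "a + int i - a = int i" by simp
  have i3: "a + int i - (b - a) = (2 * a - b) + int i" by simp
  have i4: "a + int i - - b = (a + b) + int i" by simp
  have i5: "b + int j + - b = int j" by simp
  have i6: "b + int j + (b - a) = (2 * b - a) + int j" by simp
  have i7: "b + int j + a = (a + b) + int j" by simp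
  have bZ: "z * q powi (2 * a - b + 1) = z * q powi (2 * a - b) * q" using q0 by (simp add: power_int_add)
  have bW: "w * q powi (2 * b - a + 1) = w * q powi (2 * b - a) * q" using q0 by (simp add: power_int_add)
  have bU: "z * w * q powi (a + b + 1) = z * q powi (2 * a - b) * (w * q powi (2 * b - a)) * q"
  proof -
    have ee: "a + b + 1 = (2 * a - b) + (2 * b - a) + 1" by simp
    have "q powi (a + b + 1) = q powi (2 * a - b) * q powi (2 * b - a) * q"
      unfolding ee using q0 by (simp only: power_int_add power_int_1_right simp_thms)
    thus ?thesis by (simp add: mult_ac)
  qed
  show ?thesis unfolding Phi_def i1 i2 i3 i4 i5 i6 i7
    qp_shift[OF q1 q0 hz] qp_shift[OF q1 q0 hw] qp_shift[OF q1 q0 hzw]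
    qq_nat[OF q1] bZ bW bU
    by (simp add: mult_ac)
qed

lemma k_dec:
  fixes z w q :: complex and a b :: int
  assumes q1: "norm q < 1" and q0: "q \<noteq> 0" and z0: "z \<noteq> 0" and w0: "w \<noteq> 0"
    and iN: "i \<le> N" and jM: "j \<le> M"
  shows "Kker (a + int N) (b + int M) (a + int i) (b + int j) z w q =
    (z powi a * w powi b * q powi (a * a - a * b + b * b)) *
      ((z * q powi (2 * a - b)) ^ i * (w * q powi (2 * b - a)) ^ j * q ^ (i * i + j * j) / q ^ (i * j)
        / (P q q (N - i) * P q q (M - j)))"
proof -
  have e1: "a + int N - (a + int i) = int (N - i)" using iN by simp
  have e2: "b + int M - (b + int j) = int (M - j)" using jM by simp
  show ?thesis unfolding Kker_def e1 e2 qq_nat[OF q1] kpow[OF q0 z0 w0]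
    by simp
qed



lemma main_ab:
  fixes z w q :: complex and a b n m :: int
  assumes q1: "norm q < 1" and q0: "q \<noteq> 0" and z0: "z \<noteq> 0" and w0: "w \<noteq> 0"
    and hz: "\<And>k::int. z * (q powi k) \<noteq> 1"
    and hw: "\<And>k::int. w * (q powi k) \<noteq> 1"
    and hzw: "\<And>k::int. z * w * (q powi k) \<noteq> 1"
  shows "(\<Sum>r\<in>{a..n}. \<Sum>s\<in>{b..m}. Kker n m r s z w q * Phi r s a (b - a) (- b) z w q)
     = z powi a * w powi b * q powi (a * a - a * b + b * b) * Phi n m a (b - a) (- b) z w q"
proof (cases "n < a \<or> m < b")
  case True
  have "Phi n m a (b - a) (- b) z w q = 0"
  proof (cases "n < a")
    case True
    have "qpoch q q (n - a) = 0" by (rule qpoch_neg[OF q1 q0]) (use True in simp)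
    thus ?thesis by (simp add: Phi_def)
  next
    case False
    with \<open>n < a \<or> m < b\<close> have "m < b" by simp
    have "qpoch q q (m + - b) = 0" by (rule qpoch_neg[OF q1 q0]) (use \<open>m < b\<close> in simp)
    thus ?thesis by (simp add: Phi_def)
  qed
  moreover have "(\<Sum>r\<in>{a..n}. \<Sum>s\<in>{b..m}. Kker n m r s z w q * Phi r s a (b - a) (- b) z w q) = 0"
    using True by auto
  ultimately show ?thesis by simp
next
  case False
  then obtain N M where nN: "n = a + int N" and mM: "m = b + int M"
    by (metis not_less zle_iff_zadd)
  define Z where "Z = z * q powi (2 * a - b)"
  define W where "W = w * q powi (2 * b - a)"
  define Kf where "Kf = z powi a * w powi b * q powi (a * a - a * b + b * b)"
  define C0 where "C0 = qpoch (z * w * q) q (a + b) / (qpoch (z * q) q (2 * a - b) * qpoch (z * w * q) q (a + b) *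
        qpoch (w * q) q (2 * b - a) * qpoch (z * w * q) q (a + b))"
  have hZ: "\<forall>t. Z * q * q ^ t \<noteq> 1"
  proof
    fix t :: nat
    have "Z * q * q ^ t = z * q powi (2 * a - b + 1 + int t)"
      unfolding Z_def using q0 by (simp add: power_int_add mult_ac)
    thus "Z * q * q ^ t \<noteq> 1" using hz by metis
  qed
  have hW: "\<forall>t. W * q * q ^ t \<noteq> 1"
  proof
    fix t :: nat
    have "W * q * q ^ t = w * q powi (2 * b - a + 1 + int t)"
      unfolding W_def using q0 by (simp add: power_int_add mult_ac)
    thus "W * q * q ^ t \<noteq> 1" using hw by metis
  qed
  have hU: "\<forall>t. Z * W * q * q ^ t \<noteq> 1"
  proof
    fix t :: nat
    have ee: "a + b + 1 + int t = (2 * a - b) + (2 * b - a) + 1 + int t" by simp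
    have pp: "q powi (a + b + 1 + int t) = q powi (2 * a - b) * q powi (2 * b - a) * q powi 1 * q powi (int t)"
      unfolding ee using q0 by (simp only: power_int_add simp_thms)
    have "Z * W * q * q ^ t = z * w * q powi (a + b + 1 + int t)"
      unfolding Z_def W_def pp by (simp add: mult_ac)
    thus "Z * W * q * q ^ t \<noteq> 1" using hzw by metis
  qed
  have PD: "Phi (a + int i) (b + int j) a (b - a) (- b) z w q =
     C0 * (P q (Z * W * q) (i + j) /
       (P q q i * P q (Z * q) i * P q (Z * W * q) i * P q q j * P q (W * q) j * P q (Z * W * q) j))" for i j
    unfolding C0_def Z_def W_def by (rule phi_dec[OF q1 q0 hz hw hzw])
  have "(\<Sum>r\<in>{a..n}. \<Sum>s\<in>{b..m}. Kker n m r s z w q * Phi r s a (b - a) (- b) z w q)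
     = (\<Sum>i\<le>N. \<Sum>j\<le>M. Kker n m (a + int i) (b + int j) z w q * Phi (a + int i) (b + int j) a (b - a) (- b) z w q)"
    unfolding nN mM sum_int_ivl ..
  also have "\<dots> = (\<Sum>i\<le>N. \<Sum>j\<le>M. (Kf * C0) *
      (Z ^ i * W ^ j * q ^ (i * i + j * j) / q ^ (i * j) * P q (Z * W * q) (i + j) /
            (P q q (N - i) * P q q (M - j) * P q q i * P q (Z * q) i * P q (Z * W * q) i *
             P q q j * P q (W * q) j * P q (Z * W * q) j)))"
  proof (intro sum.cong[OF refl])
    fix i j assume "i \<in> {..N}" "j \<in> {..M}"
    hence iN: "i \<le> N" and jM: "j \<le> M" by auto
    show "Kker n m (a + int i) (b + int j) z w q * Phi (a + int i) (b + int j) a (b - a) (- b) z w q =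
      (Kf * C0) * (Z ^ i * W ^ j * q ^ (i * i + j * j) / q ^ (i * j) * P q (Z * W * q) (i + j) /
            (P q q (N - i) * P q q (M - j) * P q q i * P q (Z * q) i * P q (Z * W * q) i *
             P q q j * P q (W * q) j * P q (Z * W * q) j))"
      unfolding nN mM k_dec[OF q1 q0 z0 w0 iN jM] PD
      unfolding Kf_def[symmetric] Z_def[symmetric] W_def[symmetric]
      by (simp add: mult_ac)
  qed
  also have "\<dots> = (Kf * C0) * (\<Sum>i\<le>N. \<Sum>j\<le>M.
      Z ^ i * W ^ j * q ^ (i * i + j * j) / q ^ (i * j) * P q (Z * W * q) (i + j) /
            (P q q (N - i) * P q q (M - j) * P q q i * P q (Z * q) i * P q (Z * W * q) i *
             P q q j * P q (W * q) j * P q (Z * W * q) j))"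
    by (simp add: sum_distrib_left)
  also have "\<dots> = (Kf * C0) * (P q (Z * W * q) (N + M) / (P q q N * P q q M * P q (Z * q) N * P q (Z * W * q) N *
             P q (W * q) M * P q (Z * W * q) M))"
    by (simp only: core[OF q1 q0 hZ hW hU])
  also have "\<dots> = Kf * Phi n m a (b - a) (- b) z w q"
    unfolding nN mM PD by (simp add: mult_ac)
  finally show ?thesis unfolding Kf_def .
qed

theorem corollary4p5:
  fixes n m y1 y2 y3 :: int and z w q :: complex
  assumes "y1 + y2 + y3 = 0"
    and "q \<noteq> 0" and "norm q < 1" and "z \<noteq> 0" and "w \<noteq> 0"
    and "\<And>k::int. z * (q powi k) \<noteq> 1"
    and "\<And>k::int. w * (q powi k) \<noteq> 1"
    and "\<And>k::int. z * w * (q powi k) \<noteq> 1"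
  shows "(\<Sum>r\<in>{y1..n}. \<Sum>s\<in>{y1+y2..m}. Kker n m r s z w q * Phi r s y1 y2 y3 z w q)
         = (z powi y1) * (w powi (y1 + y2)) * (q powi ((y1^2 + y2^2 + y3^2) div 2)) * Phi n m y1 y2 y3 z w q"
proof -
  have e2: "y1 + y2 - y1 = y2" by simp
  have e3: "- (y1 + y2) = y3" using assms(1) by simp
  have ex: "(y1^2 + y2^2 + y3^2) div 2 = y1 * y1 - y1 * (y1 + y2) + (y1 + y2) * (y1 + y2)"
  proof -
    have "y1^2 + y2^2 + y3^2 = 2 * (y1 * y1 - y1 * (y1 + y2) + (y1 + y2) * (y1 + y2))"
      unfolding e3[symmetric] by (simp add: power2_eq_square algebra_simps)
    thus ?thesis by simp
  qed
  show ?thesis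
    using main_ab[OF assms(3,2,4,5,6,7,8), where a=y1 and b="y1 + y2" and n=n and m=m]
    unfolding e2 e3 ex .
qed


end
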